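(* Let $Q$ be a finite quiver with $kQ$ of finite GK-dimension, and let $v,w$ be cyclic vertices. Then $\mathrm{Hom}_{\mathrm{QGr}\,kQ}(\pi^*\mathcal O_v,\pi^*\mathcal O_w)\neq0$ if and only if $v=w$. In particular $\pi^*\mathcal O_v\not\cong\pi^*\mathcal O_w$ for $v\neq w$.
   Context: $k$ is a field; $kQ$ is the path algebra graded by path length; $\mathrm{QGr}\,kQ=\mathrm{Gr}\,kQ/\mathrm{Tors}\,kQ$ with quotient functor $\pi^*$, where $\mathrm{Tors}$ consists of graded modules in which every element is annihilated by $(kQ)_{\ge n}$ for some $n$. With finite GK-dimension each cyclic vertex $v$ lies on a unique simple cycle $p=(v=v_0,a_1,\dots,a_n,v_n=v)$, and $\mathcal O_v=e_vkQ/\bigoplus p^m a_1\cdots a_i b\,kQ$ (sum over $m\ge0$, $0\le i<n$, arrows $b\neq a_{i+1}$ with source $v_i$), a graded module with basis the images of $p^m a_1\cdots a_i$. *)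

theory Defs
  imports Complex_Main "HOL-Library.Extended_Real"
begin

(* A finite quiver is given by a vertex set V, an arrow set A and source/target maps s, t.
   A path is (start vertex, list of arrows), read left to right; trivial path e_v = (v, []). *)

type_synonym ('v,'a) path = "'v \<times> 'a list"

definition quiver :: "'v set \<Rightarrow> 'a set \<Rightarrow> ('a \<Rightarrow> 'v) \<Rightarrow> ('a \<Rightarrow> 'v) \<Rightarrow> bool" where
  "quiver V A s t \<longleftrightarrow> (\<forall>a\<in>A. s a \<in> V \<and> t a \<in> V)"

definition is_path :: "'v set \<Rightarrow> 'a set \<Rightarrow> ('a \<Rightarrow> 'v) \<Rightarrow> ('a \<Rightarrow> 'v) \<Rightarrow> ('v,'a) path \<Rightarrow> bool" where
  "is_path V A s t p \<longleftrightarrow> fst p \<in> V \<and> set (snd p) \<subseteq> A \<and>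
     (snd p \<noteq> [] \<longrightarrow> s (hd (snd p)) = fst p) \<and>
     (\<forall>i. Suc i < length (snd p) \<longrightarrow> t (snd p ! i) = s (snd p ! Suc i))"

definition pend :: "('a \<Rightarrow> 'v) \<Rightarrow> ('v,'a) path \<Rightarrow> 'v" where
  "pend t p = (if snd p = [] then fst p else t (last (snd p)))"

definition plen :: "('v,'a) path \<Rightarrow> nat" where
  "plen p = length (snd p)"

definition pcat :: "('a \<Rightarrow> 'v) \<Rightarrow> ('v,'a) path \<Rightarrow> ('v,'a) path \<Rightarrow> ('v,'a) path option" where
  "pcat t p q = (if pend t p = fst q then Some (fst p, snd p @ snd q) else None)"

definition kQ :: "'v set \<Rightarrow> 'a set \<Rightarrow> ('a \<Rightarrow> 'v) \<Rightarrow> ('a \<Rightarrow> 'v) \<Rightarrow> (('v,'a) path \<Rightarrow> 'k::field) set" where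
  "kQ V A s t = {x. finite {p. x p \<noteq> 0} \<and> (\<forall>p. x p \<noteq> 0 \<longrightarrow> is_path V A s t p)}"

definition pzero :: "('v,'a) path \<Rightarrow> 'k::field" where
  "pzero = (\<lambda>p. 0)"

definition padd :: "(('v,'a) path \<Rightarrow> 'k::field) \<Rightarrow> (('v,'a) path \<Rightarrow> 'k) \<Rightarrow> ('v,'a) path \<Rightarrow> 'k" where
  "padd x y = (\<lambda>p. x p + y p)"

definition pdiff :: "(('v,'a) path \<Rightarrow> 'k::field) \<Rightarrow> (('v,'a) path \<Rightarrow> 'k) \<Rightarrow> ('v,'a) path \<Rightarrow> 'k" where
  "pdiff x y = (\<lambda>p. x p - y p)"

definition smult :: "'k::field \<Rightarrow> (('v,'a) path \<Rightarrow> 'k) \<Rightarrow> ('v,'a) path \<Rightarrow> 'k" where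
  "smult c x = (\<lambda>p. c * x p)"

definition pmult :: "('a \<Rightarrow> 'v) \<Rightarrow> (('v,'a) path \<Rightarrow> 'k::field) \<Rightarrow> (('v,'a) path \<Rightarrow> 'k) \<Rightarrow> ('v,'a) path \<Rightarrow> 'k" where
  "pmult t x y = (\<lambda>r. \<Sum>pq\<in>{pq. x (fst pq) \<noteq> 0 \<and> y (snd pq) \<noteq> 0 \<and> pcat t (fst pq) (snd pq) = Some r}.
                      x (fst pq) * y (snd pq))"

definition pbasis :: "('v,'a) path \<Rightarrow> ('v,'a) path \<Rightarrow> 'k::field" where
  "pbasis p = (\<lambda>q. if q = p then 1 else 0)"

definition homog :: "nat \<Rightarrow> (('v,'a) path \<Rightarrow> 'k::field) \<Rightarrow> bool" where
  "homog d x \<longleftrightarrow> (\<forall>p. x p \<noteq> 0 \<longrightarrow> plen p = d)"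

definition hcomp :: "nat \<Rightarrow> (('v,'a) path \<Rightarrow> 'k::field) \<Rightarrow> ('v,'a) path \<Rightarrow> 'k" where
  "hcomp d x = (\<lambda>p. if plen p = d then x p else 0)"

definition rsub :: "'v set \<Rightarrow> 'a set \<Rightarrow> ('a \<Rightarrow> 'v) \<Rightarrow> ('a \<Rightarrow> 'v) \<Rightarrow> (('v,'a) path \<Rightarrow> 'k::field) set \<Rightarrow> bool" where
  "rsub V A s t S \<longleftrightarrow> S \<subseteq> kQ V A s t \<and> pzero \<in> S \<and> (\<forall>x\<in>S. \<forall>y\<in>S. padd x y \<in> S) \<and>
     (\<forall>c. \<forall>x\<in>S. smult c x \<in> S) \<and> (\<forall>x\<in>S. \<forall>y\<in>kQ V A s t. pmult t x y \<in> S)"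

definition gsub :: "'v set \<Rightarrow> 'a set \<Rightarrow> ('a \<Rightarrow> 'v) \<Rightarrow> ('a \<Rightarrow> 'v) \<Rightarrow> (('v,'a) path \<Rightarrow> 'k::field) set \<Rightarrow> bool" where
  "gsub V A s t S \<longleftrightarrow> rsub V A s t S \<and> (\<forall>d. \<forall>x\<in>S. hcomp d x \<in> S)"

definition gen_rsub :: "'v set \<Rightarrow> 'a set \<Rightarrow> ('a \<Rightarrow> 'v) \<Rightarrow> ('a \<Rightarrow> 'v) \<Rightarrow> (('v,'a) path \<Rightarrow> 'k::field) set \<Rightarrow> (('v,'a) path \<Rightarrow> 'k) set" where
  "gen_rsub V A s t G = \<Inter>{S. rsub V A s t S \<and> G \<subseteq> S}"

(* the quotient M/N (N \<subseteq> M submodules) lies in Tors kQ: every element is killed by (kQ)_{>= n} *)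
definition torsion_quot :: "'v set \<Rightarrow> 'a set \<Rightarrow> ('a \<Rightarrow> 'v) \<Rightarrow> ('a \<Rightarrow> 'v) \<Rightarrow> (('v,'a) path \<Rightarrow> 'k::field) set \<Rightarrow> (('v,'a) path \<Rightarrow> 'k) set \<Rightarrow> bool" where
  "torsion_quot V A s t M N \<longleftrightarrow> (\<forall>x\<in>M. \<exists>n. \<forall>y\<in>kQ V A s t. (\<forall>p. y p \<noteq> 0 \<longrightarrow> n \<le> plen p) \<longrightarrow> pmult t x y \<in> N)"

(* A graded module is represented as a subquotient (M, N) of kQ, i.e. M/N for graded
   right submodules N \<subseteq> M of kQ.  A degree-0 graded homomorphism M/N \<rightarrow> M'/N'
   is represented by a function f on representatives. *)
definition gr_hom :: "'v set \<Rightarrow> 'a set \<Rightarrow> ('a \<Rightarrow> 'v) \<Rightarrow> ('a \<Rightarrow> 'v) \<Rightarrow>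
    (('v,'a) path \<Rightarrow> 'k::field) set \<times> (('v,'a) path \<Rightarrow> 'k) set \<Rightarrow>
    (('v,'a) path \<Rightarrow> 'k) set \<times> (('v,'a) path \<Rightarrow> 'k) set \<Rightarrow>
    ((('v,'a) path \<Rightarrow> 'k) \<Rightarrow> (('v,'a) path \<Rightarrow> 'k)) \<Rightarrow> bool" where
  "gr_hom V A s t M N f \<longleftrightarrow>
     (\<forall>x\<in>fst M. f x \<in> fst N) \<and> (\<forall>x\<in>snd M. f x \<in> snd N) \<and>
     (\<forall>x\<in>fst M. \<forall>y\<in>fst M. pdiff (f (padd x y)) (padd (f x) (f y)) \<in> snd N) \<and>
     (\<forall>c. \<forall>x\<in>fst M. pdiff (f (smult c x)) (smult c (f x)) \<in> snd N) \<and>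
     (\<forall>x\<in>fst M. \<forall>y\<in>kQ V A s t. pdiff (f (pmult t x y)) (pmult t (f x) y) \<in> snd N) \<and>
     (\<forall>d. \<forall>x\<in>fst M. homog d x \<longrightarrow> (\<exists>z\<in>fst N. homog d z \<and> pdiff (f x) z \<in> snd N))"

(* Hom_{QGr}(pi* M, pi* N) = colim Hom_{Gr}(M', N/N') over M' \<subseteq> M with M/M' torsion and
   N' \<subseteq> N torsion (Gabriel's description of Hom in a quotient category).
   It is nonzero iff some representative f stays nonzero after every further restriction. *)
definition qgr_hom_nonzero :: "'v set \<Rightarrow> 'a set \<Rightarrow> ('a \<Rightarrow> 'v) \<Rightarrow> ('a \<Rightarrow> 'v) \<Rightarrow>
    (('v,'a) path \<Rightarrow> 'k::field) set \<times> (('v,'a) path \<Rightarrow> 'k) set \<Rightarrow>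
    (('v,'a) path \<Rightarrow> 'k) set \<times> (('v,'a) path \<Rightarrow> 'k) set \<Rightarrow> bool" where
  "qgr_hom_nonzero V A s t M N \<longleftrightarrow>
    (\<exists>M' N' f.
       gsub V A s t M' \<and> snd M \<subseteq> M' \<and> M' \<subseteq> fst M \<and> torsion_quot V A s t (fst M) M' \<and>
       gsub V A s t N' \<and> snd N \<subseteq> N' \<and> N' \<subseteq> fst N \<and> torsion_quot V A s t N' (snd N) \<and>
       gr_hom V A s t (M', snd M) (fst N, N') f \<and>
       (\<forall>M'' N''.
          gsub V A s t M'' \<and> snd M \<subseteq> M'' \<and> M'' \<subseteq> M' \<and> torsion_quot V A s t (fst M) M'' \<and>
          gsub V A s t N'' \<and> N' \<subseteq> N'' \<and> N'' \<subseteq> fst N \<and> torsion_quot V A s t N'' (snd N)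
          \<longrightarrow> (\<exists>x\<in>M''. f x \<notin> N'')))"

(* GK-dimension of kQ w.r.t. the generating subspace kQ_0 + kQ_1 (V^n spanned by paths of length \<le> n) *)
definition gk_dim :: "'v set \<Rightarrow> 'a set \<Rightarrow> ('a \<Rightarrow> 'v) \<Rightarrow> ('a \<Rightarrow> 'v) \<Rightarrow> ereal" where
  "gk_dim V A s t = limsup (\<lambda>n::nat. ereal (ln (real (card {p. is_path V A s t p \<and> plen p \<le> n})) / ln (real n)))"

definition cyclic_vertex :: "'v set \<Rightarrow> 'a set \<Rightarrow> ('a \<Rightarrow> 'v) \<Rightarrow> ('a \<Rightarrow> 'v) \<Rightarrow> 'v \<Rightarrow> bool" where
  "cyclic_vertex V A s t v \<longleftrightarrow> (\<exists>as. is_path V A s t (v, as) \<and> as \<noteq> [] \<and> pend t (v, as) = v)"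

definition simple_cycle :: "'v set \<Rightarrow> 'a set \<Rightarrow> ('a \<Rightarrow> 'v) \<Rightarrow> ('a \<Rightarrow> 'v) \<Rightarrow> 'v \<Rightarrow> 'a list \<Rightarrow> bool" where
  "simple_cycle V A s t v as \<longleftrightarrow> is_path V A s t (v, as) \<and> as \<noteq> [] \<and> pend t (v, as) = v \<and> distinct (map s as)"

definition the_cycle :: "'v set \<Rightarrow> 'a set \<Rightarrow> ('a \<Rightarrow> 'v) \<Rightarrow> ('a \<Rightarrow> 'v) \<Rightarrow> 'v \<Rightarrow> 'a list" where
  "the_cycle V A s t v = (THE as. simple_cycle V A s t v as)"

definition O_gens :: "'v set \<Rightarrow> 'a set \<Rightarrow> ('a \<Rightarrow> 'v) \<Rightarrow> ('a \<Rightarrow> 'v) \<Rightarrow> 'v \<Rightarrow> (('v,'a) path \<Rightarrow> 'k::field) set" where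
  "O_gens V A s t v = (let p = the_cycle V A s t v in
     {pbasis (v, concat (replicate m p) @ take i p @ [b]) | m i b.
        i < length p \<and> b \<in> A \<and> s b = s (p ! i) \<and> b \<noteq> p ! i})"

definition evkQ :: "'v set \<Rightarrow> 'a set \<Rightarrow> ('a \<Rightarrow> 'v) \<Rightarrow> ('a \<Rightarrow> 'v) \<Rightarrow> 'v \<Rightarrow> (('v,'a) path \<Rightarrow> 'k::field) set" where
  "evkQ V A s t v = {pmult t (pbasis (v, [])) y | y. y \<in> kQ V A s t}"

(* O_v = e_v kQ / (sum of p^m a_1 ... a_i b kQ), as a subquotient of kQ *)
definition O_mod :: "'v set \<Rightarrow> 'a set \<Rightarrow> ('a \<Rightarrow> 'v) \<Rightarrow> ('a \<Rightarrow> 'v) \<Rightarrow> 'v \<Rightarrow>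
    (('v,'a) path \<Rightarrow> 'k::field) set \<times> (('v,'a) path \<Rightarrow> 'k) set" where
  "O_mod V A s t v = (evkQ V A s t v, gen_rsub V A s t (O_gens V A s t v))"

end

theory Submission
  imports Defs "HOL-Real_Asymp.Real_Asymp"
begin


fun walk :: "('a \<Rightarrow> 'v) \<Rightarrow> ('a \<Rightarrow> 'v) \<Rightarrow> 'v \<Rightarrow> 'a list \<Rightarrow> bool" where
  "walk s t a [] = True"
| "walk s t a (b # l) = (s b = a \<and> walk s t (t b) l)"

lemma chain_walk:
  "((l \<noteq> [] \<longrightarrow> s (hd l) = a) \<and> (\<forall>i. Suc i < length l \<longrightarrow> t (l ! i) = s (l ! Suc i)))
   \<longleftrightarrow> walk s t a l"
proof (induction l arbitrary: a)
  case Nil then show ?case by simp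
next
  case (Cons b l)
  have "(\<forall>i. Suc i < length (b # l) \<longrightarrow> t ((b # l) ! i) = s ((b # l) ! Suc i))
        \<longleftrightarrow> (l \<noteq> [] \<longrightarrow> s (hd l) = t b) \<and> (\<forall>i. Suc i < length l \<longrightarrow> t (l ! i) = s (l ! Suc i))"
  proof
    assume H: "\<forall>i. Suc i < length (b # l) \<longrightarrow> t ((b # l) ! i) = s ((b # l) ! Suc i)"
    show "(l \<noteq> [] \<longrightarrow> s (hd l) = t b) \<and> (\<forall>i. Suc i < length l \<longrightarrow> t (l ! i) = s (l ! Suc i))"
    proof
      show "l \<noteq> [] \<longrightarrow> s (hd l) = t b"
        using H[rule_format, of 0] by (cases l) auto
      show "\<forall>i. Suc i < length l \<longrightarrow> t (l ! i) = s (l ! Suc i)"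
        using H by (metis Suc_less_eq length_Cons nth_Cons_Suc)
    qed
  next
    assume H: "(l \<noteq> [] \<longrightarrow> s (hd l) = t b) \<and> (\<forall>i. Suc i < length l \<longrightarrow> t (l ! i) = s (l ! Suc i))"
    show "\<forall>i. Suc i < length (b # l) \<longrightarrow> t ((b # l) ! i) = s ((b # l) ! Suc i)"
    proof (intro allI impI)
      fix i assume "Suc i < length (b # l)"
      then show "t ((b # l) ! i) = s ((b # l) ! Suc i)"
        using H by (cases i) (auto simp: hd_conv_nth)
    qed
  qed
  then show ?case using Cons.IH[of "t b"] by auto
qed

lemma is_path_walk:
  "is_path V A s t (a, l) \<longleftrightarrow> a \<in> V \<and> set l \<subseteq> A \<and> walk s t a l"
  unfolding is_path_def using chain_walk[of l s a t] by auto

lemma is_path_walk':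
  "is_path V A s t p \<longleftrightarrow> fst p \<in> V \<and> set (snd p) \<subseteq> A \<and> walk s t (fst p) (snd p)"
  using is_path_walk[of V A s t "fst p" "snd p"] by simp

lemma pend_Nil[simp]: "pend t (a, []) = a" by (simp add: pend_def)

lemma pend_Cons[simp]: "pend t (a, b # l) = pend t (t b, l)"
  by (simp add: pend_def)

lemma pend_append: "pend t (a, l1 @ l2) = pend t (pend t (a, l1), l2)"
  by (simp add: pend_def)

lemma walk_append: "walk s t a (l1 @ l2) \<longleftrightarrow> walk s t a l1 \<and> walk s t (pend t (a, l1)) l2"
  by (induction l1 arbitrary: a) auto

lemma pend_take:
  "walk s t a l \<Longrightarrow> i < length l \<Longrightarrow> pend t (a, take i l) = s (l ! i)"
proof (induction l arbitrary: a i)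
  case Nil then show ?case by simp
next
  case (Cons b l) then show ?case by (cases i) auto
qed

definition cpow :: "'a list \<Rightarrow> nat \<Rightarrow> 'a list" where
  "cpow p k = concat (replicate k p)"

lemma cpow_add: "cpow p (m + n) = cpow p m @ cpow p n"
  by (simp add: cpow_def replicate_add)

lemma length_cpow[simp]: "length (cpow p k) = k * length p"
  by (induction k) (auto simp: cpow_def)

lemma set_cpow: "set (cpow p k) \<subseteq> set p"
  by (induction k) (auto simp: cpow_def)

lemma walk_cpow: "walk s t a p \<Longrightarrow> pend t (a, p) = a \<Longrightarrow> walk s t a (cpow p k) \<and> pend t (a, cpow p k) = a"
proof (induction k)
  case 0 then show ?case by (simp add: cpow_def)
next
  case (Suc k)
  have e: "cpow p (Suc k) = p @ cpow p k" by (simp add: cpow_def)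
  show ?case using Suc by (simp add: e walk_append pend_append)
qed

lemma nth_cpow: "j < k * length p \<Longrightarrow> cpow p k ! j = p ! (j mod length p)"
proof (induction k arbitrary: j)
  case 0 then show ?case by simp
next
  case (Suc k)
  have e: "cpow p (Suc k) = p @ cpow p k" by (simp add: cpow_def)
  show ?case
  proof (cases "j < length p")
    case True then show ?thesis by (simp add: e nth_append)
  next
    case False
    then have "j - length p < k * length p" using Suc.prems by auto
    then show ?thesis using False Suc.IH[of "j - length p"]
      by (simp add: e nth_append mod_if)
  qed
qed

lemma nth_gen:
  assumes "i < length p" "idx < m * length p + i"
  shows "(cpow p m @ take i p @ [b]) ! idx = p ! (idx mod length p)"
proof (cases "idx < m * length p")
  case True then show ?thesis by (simp add: nth_append nth_cpow)
next
  case False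
  then have d: "idx - m * length p < i" using assms by auto
  have "idx mod length p = idx - m * length p"
  proof -
    have "idx = (idx - m * length p) + m * length p" using False by auto
    then have "idx mod length p = (idx - m * length p) mod length p"
      by (metis mod_mult_self1)
    also have "\<dots> = idx - m * length p" using d assms by auto
    finally show ?thesis .
  qed
  then show ?thesis using False d assms by (simp add: nth_append)
qed



definition splitl :: "('a \<Rightarrow> 'v) \<Rightarrow> ('v,'a) path \<Rightarrow> nat \<Rightarrow> ('v,'a) path \<times> ('v,'a) path" where
  "splitl t r k = ((fst r, take k (snd r)), (pend t (fst r, take k (snd r)), drop k (snd r)))"

lemma pcat_Some_iff:
  "pcat t p q = Some r \<longleftrightarrow> (\<exists>k \<le> length (snd r). (p, q) = splitl t r k)"
proof
  assume "pcat t p q = Some r"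
  then have h: "pend t p = fst q" "r = (fst p, snd p @ snd q)"
    by (auto simp: pcat_def split: if_splits)
  show "\<exists>k \<le> length (snd r). (p, q) = splitl t r k"
    by (rule exI[of _ "length (snd p)"]) (use h in \<open>auto simp: splitl_def prod_eq_iff\<close>)
next
  assume "\<exists>k \<le> length (snd r). (p, q) = splitl t r k"
  then obtain k where "k \<le> length (snd r)" "(p, q) = splitl t r k" by blast
  then show "pcat t p q = Some r"
    by (auto simp: splitl_def pcat_def)
qed

lemma pmult_formula:
  "pmult t x y r = (\<Sum>k\<le>length (snd r). x (fst (splitl t r k)) * y (snd (splitl t r k)))"
proof -
  let ?S = "{pq. x (fst pq) \<noteq> 0 \<and> y (snd pq) \<noteq> 0 \<and> pcat t (fst pq) (snd pq) = Some r}"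
  let ?P = "splitl t r ` {..length (snd r)}"
  have sub: "?S \<subseteq> ?P"
  proof
    fix pq assume "pq \<in> ?S"
    then have "pcat t (fst pq) (snd pq) = Some r" by simp
    then obtain k where "k \<le> length (snd r)" "(fst pq, snd pq) = splitl t r k"
      using pcat_Some_iff by blast
    then show "pq \<in> ?P" by auto
  qed
  have "pmult t x y r = (\<Sum>pq\<in>?S. x (fst pq) * y (snd pq))" by (simp add: pmult_def)
  also have "\<dots> = (\<Sum>pq\<in>?P. x (fst pq) * y (snd pq))"
    by (rule sum.mono_neutral_left) (use sub pcat_Some_iff[of t] in auto)
  also have "\<dots> = (\<Sum>k\<le>length (snd r). x (fst (splitl t r k)) * y (snd (splitl t r k)))"
  proof (rule sum.reindex_cong[where l = "splitl t r"])
    show "inj_on (splitl t r) {..length (snd r)}"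
      by (auto simp: inj_on_def splitl_def) (metis length_take min.absorb2)
  qed auto
  finally show ?thesis .
qed

lemma pmult_nonzero:
  assumes "pmult t x y r \<noteq> 0"
  shows "\<exists>k \<le> length (snd r). x (fst r, take k (snd r)) \<noteq> 0 \<and>
           y (pend t (fst r, take k (snd r)), drop k (snd r)) \<noteq> 0"
proof -
  from assms obtain k where "k \<in> {..length (snd r)}"
    "x (fst (splitl t r k)) * y (snd (splitl t r k)) \<noteq> 0"
    unfolding pmult_formula by (meson sum.not_neutral_contains_not_neutral)
  then show ?thesis by (auto simp: splitl_def)
qed

lemma pmult_pdiff_left: "pmult t (pdiff a b) c = pdiff (pmult t a c) (pmult t b c)"
  by (rule ext) (simp add: pmult_formula pdiff_def sum_subtractf algebra_simps)

lemma pmult_left_unit: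
  "pmult t (pbasis (v, [])) y = (\<lambda>r. if fst r = v then y r else 0)"
proof (rule ext)
  fix r
  have "pmult t (pbasis (v, [])) y r =
        (\<Sum>k\<le>length (snd r). (if k = 0 \<and> fst r = v then y r else 0))"
    unfolding pmult_formula
    by (rule sum.cong) (auto simp: splitl_def pbasis_def, metis prod.collapse)
  also have "\<dots> = (if fst r = v then y r else 0)"
    by (simp add: sum.delta')
  finally show "pmult t (pbasis (v, [])) y r = (if fst r = v then y r else 0)" .
qed

lemma pmult_right_unit:
  "pmult t x (pbasis (v, [])) = (\<lambda>r. if pend t r = v then x r else 0)"
proof (rule ext)
  fix r
  have "pmult t x (pbasis (v, [])) r =
        (\<Sum>k\<le>length (snd r). (if k = length (snd r) \<and> pend t r = v then x r else 0))"
    unfolding pmult_formula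
    by (rule sum.cong) (auto simp: splitl_def pbasis_def)
  also have "\<dots> = (if pend t r = v then x r else 0)"
    by (simp add: sum.delta')
  finally show "pmult t x (pbasis (v, [])) r = (if pend t r = v then x r else 0)" .
qed

lemma pmult_pbasis:
  assumes "pend t g = fst h"
  shows "pmult t (pbasis g) (pbasis h) = pbasis (fst g, snd g @ snd h)"
proof (rule ext)
  fix r
  have "pmult t (pbasis g) (pbasis h) r =
        (\<Sum>k\<le>length (snd r). (if k = length (snd g) \<and> r = (fst g, snd g @ snd h) then 1 else 0))"
    unfolding pmult_formula
  proof (rule sum.cong)
    fix k assume k: "k \<in> {..length (snd r)}"
    show "pbasis g (fst (splitl t r k)) * pbasis h (snd (splitl t r k)) =
          (if k = length (snd g) \<and> r = (fst g, snd g @ snd h) then 1 else 0)"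
      using k assms by (cases g; cases h; cases r) (auto simp: splitl_def pbasis_def)
  qed simp
  also have "\<dots> = pbasis (fst g, snd g @ snd h) r"
    by (auto simp: sum.delta' pbasis_def)
  finally show "pmult t (pbasis g) (pbasis h) r = pbasis (fst g, snd g @ snd h) r" .
qed



lemma supp_finite_kQ: "x \<in> kQ V A s t \<Longrightarrow> finite {p. x p \<noteq> 0}"
  by (simp add: kQ_def)

lemma kQ_path: "x \<in> kQ V A s t \<Longrightarrow> x p \<noteq> 0 \<Longrightarrow> is_path V A s t p"
  unfolding kQ_def by blast

lemma kQ_I: "finite {p. x p \<noteq> 0} \<Longrightarrow> (\<And>p. x p \<noteq> 0 \<Longrightarrow> is_path V A s t p) \<Longrightarrow> x \<in> kQ V A s t"
  by (simp add: kQ_def)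

lemma kQ_pzero: "pzero \<in> kQ V A s t"
  by (simp add: kQ_def pzero_def)

lemma kQ_padd: "x \<in> kQ V A s t \<Longrightarrow> y \<in> kQ V A s t \<Longrightarrow> padd x y \<in> kQ V A s t"
proof (rule kQ_I)
  assume x: "x \<in> kQ V A s t" and y: "y \<in> kQ V A s t"
  have "{p. padd x y p \<noteq> 0} \<subseteq> {p. x p \<noteq> 0} \<union> {p. y p \<noteq> 0}" by (auto simp: padd_def)
  then show "finite {p. padd x y p \<noteq> 0}"
    using supp_finite_kQ[OF x] supp_finite_kQ[OF y] by (meson finite_Un finite_subset)
  fix p assume "padd x y p \<noteq> 0"
  then have "x p \<noteq> 0 \<or> y p \<noteq> 0" by (auto simp: padd_def)
  then show "is_path V A s t p" using x y kQ_path by metis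
qed

lemma kQ_pdiff: "x \<in> kQ V A s t \<Longrightarrow> y \<in> kQ V A s t \<Longrightarrow> pdiff x y \<in> kQ V A s t"
proof (rule kQ_I)
  assume x: "x \<in> kQ V A s t" and y: "y \<in> kQ V A s t"
  have "{p. pdiff x y p \<noteq> 0} \<subseteq> {p. x p \<noteq> 0} \<union> {p. y p \<noteq> 0}" by (auto simp: pdiff_def)
  then show "finite {p. pdiff x y p \<noteq> 0}"
    using supp_finite_kQ[OF x] supp_finite_kQ[OF y] by (meson finite_Un finite_subset)
  fix p assume "pdiff x y p \<noteq> 0"
  then have "x p \<noteq> 0 \<or> y p \<noteq> 0" by (auto simp: pdiff_def)
  then show "is_path V A s t p" using x y kQ_path by metis
qed

lemma kQ_smult: "x \<in> kQ V A s t \<Longrightarrow> smult c x \<in> kQ V A s t"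
proof (rule kQ_I)
  assume x: "x \<in> kQ V A s t"
  have "{p. smult c x p \<noteq> 0} \<subseteq> {p. x p \<noteq> 0}" by (auto simp: smult_def)
  then show "finite {p. smult c x p \<noteq> 0}"
    using supp_finite_kQ[OF x] by (meson finite_subset)
  fix p assume "smult c x p \<noteq> 0"
  then show "is_path V A s t p" using x kQ_path by (fastforce simp: smult_def)
qed

lemma kQ_hcomp: "x \<in> kQ V A s t \<Longrightarrow> hcomp d x \<in> kQ V A s t"
proof (rule kQ_I)
  assume x: "x \<in> kQ V A s t"
  have "{p. hcomp d x p \<noteq> 0} \<subseteq> {p. x p \<noteq> 0}" by (auto simp: hcomp_def)
  then show "finite {p. hcomp d x p \<noteq> 0}"
    using supp_finite_kQ[OF x] by (meson finite_subset)
  fix p assume "hcomp d x p \<noteq> 0"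
  then show "is_path V A s t p" using x kQ_path by (fastforce simp: hcomp_def split: if_splits)
qed

lemma kQ_pbasis: "is_path V A s t g \<Longrightarrow> pbasis g \<in> kQ V A s t"
  by (rule kQ_I) (auto simp: pbasis_def split: if_splits)

lemma pend_in_V:
  assumes "quiver V A s t" "is_path V A s t p"
  shows "pend t p \<in> V"
proof (cases "snd p = []")
  case True then show ?thesis using assms by (simp add: pend_def is_path_def)
next
  case False
  then have "last (snd p) \<in> A" using assms(2) last_in_set[of "snd p"] by (auto simp: is_path_def)
  then show ?thesis using assms(1) False by (simp add: pend_def quiver_def)
qed

lemma path_append:
  assumes "is_path V A s t p" "is_path V A s t q" "pend t p = fst q"
  shows "is_path V A s t (fst p, snd p @ snd q)"
  using assms by (auto simp: is_path_walk' walk_append)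

lemma path_suffix:
  assumes "quiver V A s t" "is_path V A s t (a, l1 @ l2)"
  shows "is_path V A s t (pend t (a, l1), l2)" "is_path V A s t (a, l1)"
proof -
  have w: "walk s t a l1" "walk s t (pend t (a, l1)) l2" "a \<in> V" "set l1 \<subseteq> A" "set l2 \<subseteq> A"
    using assms(2) by (auto simp: is_path_walk walk_append)
  then show p1: "is_path V A s t (a, l1)" by (simp add: is_path_walk)
  show "is_path V A s t (pend t (a, l1), l2)"
    using w pend_in_V[OF assms(1) p1] by (simp add: is_path_walk)
qed

lemma kQ_pmult:
  assumes q: "quiver V A s t" and x: "x \<in> kQ V A s t" and y: "y \<in> kQ V A s t"
  shows "pmult t x y \<in> kQ V A s t"
proof (rule kQ_I)
  let ?F = "(\<lambda>pq. (fst (fst pq), snd (fst pq) @ snd (snd pq))) ` ({p. x p \<noteq> 0} \<times> {p. y p \<noteq> 0})"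
  have "{r. pmult t x y r \<noteq> 0} \<subseteq> ?F"
  proof
    fix r assume "r \<in> {r. pmult t x y r \<noteq> 0}"
    then obtain k where "k \<le> length (snd r)" "x (fst r, take k (snd r)) \<noteq> 0"
      "y (pend t (fst r, take k (snd r)), drop k (snd r)) \<noteq> 0"
      using pmult_nonzero by blast
    then show "r \<in> ?F"
      by (intro image_eqI[of _ _ "((fst r, take k (snd r)), (pend t (fst r, take k (snd r)), drop k (snd r)))"]) auto
  qed
  then show "finite {r. pmult t x y r \<noteq> 0}"
    using supp_finite_kQ[OF x] supp_finite_kQ[OF y] by (meson finite_SigmaI finite_imageI finite_subset)
  fix r assume "pmult t x y r \<noteq> 0"
  then obtain k where "k \<le> length (snd r)" and h1: "x (fst r, take k (snd r)) \<noteq> 0"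
      and h2: "y (pend t (fst r, take k (snd r)), drop k (snd r)) \<noteq> 0"
    using pmult_nonzero by blast
  have "is_path V A s t (fst (fst r, take k (snd r)), snd (fst r, take k (snd r)) @ snd (pend t (fst r, take k (snd r)), drop k (snd r)))"
    by (rule path_append) (use kQ_path[OF x h1] kQ_path[OF y h2] in auto)
  then show "is_path V A s t r" by simp
qed

definition Pref :: "'v set \<Rightarrow> 'a set \<Rightarrow> ('a \<Rightarrow> 'v) \<Rightarrow> ('a \<Rightarrow> 'v) \<Rightarrow> ('v,'a) path set \<Rightarrow> (('v,'a) path \<Rightarrow> 'k::field) set" where
  "Pref V A s t P = {x \<in> kQ V A s t. \<forall>q. x q \<noteq> 0 \<longrightarrow> (\<exists>g\<in>P. \<exists>r. q = (fst g, snd g @ r))}"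

lemma Pref_iff: "x \<in> Pref V A s t P \<longleftrightarrow> x \<in> kQ V A s t \<and> (\<forall>q. x q \<noteq> 0 \<longrightarrow> (\<exists>g\<in>P. \<exists>r. q = (fst g, snd g @ r)))"
  by (simp only: Pref_def mem_Collect_eq)

lemma Pref_mono: "P \<subseteq> P' \<Longrightarrow> Pref V A s t P \<subseteq> Pref V A s t P'"
  by (auto simp: Pref_def) blast

lemma Pref_rsub:
  fixes P :: "('v,'a) path set"
  assumes q: "quiver V A s t"
  shows "rsub V A s t (Pref V A s t P :: (('v,'a) path \<Rightarrow> 'k::field) set)"
  unfolding rsub_def
proof (intro conjI ballI allI)
  show "Pref V A s t P \<subseteq> kQ V A s t" by (auto simp: Pref_def)
  show "pzero \<in> Pref V A s t P" using kQ_pzero by (auto simp: Pref_def pzero_def)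
  fix x :: "('v,'a) path \<Rightarrow> 'k" assume x: "x \<in> Pref V A s t P"
  {
    fix y :: "('v,'a) path \<Rightarrow> 'k" assume y: "y \<in> Pref V A s t P"
    have "padd x y \<in> kQ V A s t" using x y kQ_padd by (auto simp: Pref_def)
    moreover have "\<exists>g\<in>P. \<exists>r. q = (fst g, snd g @ r)" if "padd x y q \<noteq> 0" for q
    proof -
      have "x q \<noteq> 0 \<or> y q \<noteq> 0" using that by (auto simp: padd_def)
      then show ?thesis using x y unfolding Pref_def by blast
    qed
    ultimately show "padd x y \<in> Pref V A s t P" unfolding Pref_iff by blast
  }
  {
    fix c
    have "smult c x \<in> kQ V A s t" using x kQ_smult unfolding Pref_iff by blast
    moreover have "\<forall>q. smult c x q \<noteq> 0 \<longrightarrow> x q \<noteq> 0" by (simp add: smult_def)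
    ultimately show "smult c x \<in> Pref V A s t P" using x unfolding Pref_iff by blast
  }
  {
    fix y :: "('v,'a) path \<Rightarrow> 'k" assume y: "y \<in> kQ V A s t"
    have "pmult t x y \<in> kQ V A s t" using kQ_pmult[OF q _ y] x by (auto simp: Pref_def)
    moreover have "\<exists>g\<in>P. \<exists>r'. r = (fst g, snd g @ r')" if nz: "pmult t x y r \<noteq> 0" for r
    proof -
      obtain k where "k \<le> length (snd r)" and h1: "x (fst r, take k (snd r)) \<noteq> 0"
        using pmult_nonzero[OF nz] by blast
      then obtain g r' where g: "g \<in> P" and e: "(fst r, take k (snd r)) = (fst g, snd g @ r')"
        using x h1 unfolding Pref_iff by blast
      have "r = (fst r, take k (snd r) @ drop k (snd r))" by simp
      also have "\<dots> = (fst g, snd g @ r' @ drop k (snd r))" using e by simp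
      finally show ?thesis using g by blast
    qed
    ultimately show "pmult t x y \<in> Pref V A s t P" unfolding Pref_iff by blast
  }
qed

lemma Pref_gsub:
  fixes P :: "('v,'a) path set"
  assumes q: "quiver V A s t"
  shows "gsub V A s t (Pref V A s t P :: (('v,'a) path \<Rightarrow> 'k::field) set)"
  unfolding gsub_def
proof (intro conjI allI ballI)
  show "rsub V A s t (Pref V A s t P :: (('v,'a) path \<Rightarrow> 'k::field) set)" by (rule Pref_rsub[OF q])
  fix d and x :: "('v,'a) path \<Rightarrow> 'k" assume x: "x \<in> Pref V A s t P"
  then have "hcomp d x \<in> kQ V A s t" by (simp add: Pref_def kQ_hcomp)
  then show "hcomp d x \<in> Pref V A s t P"
    using x by (auto simp: Pref_def hcomp_def split: if_splits)
qed

lemma pbasis_Pref: "is_path V A s t g \<Longrightarrow> g \<in> P \<Longrightarrow> pbasis g \<in> Pref V A s t P"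
  unfolding Pref_def
proof (intro CollectI conjI allI impI)
  assume a: "is_path V A s t g" "g \<in> P"
  from a(1) show "pbasis g \<in> kQ V A s t" by (rule kQ_pbasis)
  fix q assume "pbasis g q \<noteq> 0"
  then have "q = g" by (simp add: pbasis_def split: if_splits)
  then show "\<exists>g\<in>P. \<exists>r. q = (fst g, snd g @ r)" using \<open>g \<in> P\<close> by (intro bexI[of _ g] exI[of _ "[]"]) auto
qed

lemma rsub_partial_sums:
  assumes S: "rsub V A s t S" and "finite F" and "\<forall>q\<in>F. pbasis q \<in> S"
  shows "(\<lambda>p. if p \<in> F then x p else 0) \<in> S"
  using assms(2,3)
proof (induction F rule: finite_induct)
  case empty
  then show ?case using S by (simp add: rsub_def pzero_def)
next
  case (insert q F)
  have e: "(\<lambda>p. if p \<in> insert q F then x p else 0) =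
           padd (\<lambda>p. if p \<in> F then x p else 0) (smult (x q) (pbasis q))"
    using insert(2) by (auto simp: padd_def smult_def pbasis_def)
  show ?case unfolding e using S insert by (auto simp: rsub_def)
qed

lemma gen_rsub_Pref:
  assumes q: "quiver V A s t" and P: "\<forall>g\<in>P. is_path V A s t g"
  shows "gen_rsub V A s t (pbasis ` P) = (Pref V A s t P :: (('v,'a) path \<Rightarrow> 'k::field) set)"
proof
  show "gen_rsub V A s t (pbasis ` P) \<subseteq> (Pref V A s t P :: (('v,'a) path \<Rightarrow> 'k::field) set)"
    unfolding gen_rsub_def using Pref_rsub[OF q] pbasis_Pref P by blast
  show "(Pref V A s t P :: (('v,'a) path \<Rightarrow> 'k::field) set) \<subseteq> gen_rsub V A s t (pbasis ` P)"
  proof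
    fix x :: "('v,'a) path \<Rightarrow> 'k" assume x: "x \<in> Pref V A s t P"
    show "x \<in> gen_rsub V A s t (pbasis ` P)"
      unfolding gen_rsub_def
    proof (rule InterI, clarify)
      fix S :: "(('v,'a) path \<Rightarrow> 'k) set" assume S: "rsub V A s t S" and G: "pbasis ` P \<subseteq> S"
      let ?F = "{p. x p \<noteq> 0}"
      have fin: "finite ?F" using x by (auto simp: Pref_def kQ_def)
      have "\<forall>q\<in>?F. pbasis q \<in> S"
      proof
        fix qq assume qq: "qq \<in> ?F"
        then obtain g r where g: "g \<in> P" and e: "qq = (fst g, snd g @ r)"
          using x unfolding Pref_iff by blast
        have pq: "is_path V A s t qq" using x qq kQ_path unfolding Pref_iff by blast
        have ph: "is_path V A s t (pend t (fst g, snd g), r)"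
          using path_suffix(1)[OF q, of "fst g" "snd g" r] pq e by simp
        have "pmult t (pbasis g) (pbasis (pend t g, r)) = pbasis (fst g, snd g @ r)"
          using pmult_pbasis[of t g "(pend t g, r)"] by simp
        moreover have "pbasis g \<in> S" using G g by auto
        moreover have "pbasis (pend t g, r) \<in> kQ V A s t"
          using ph by (intro kQ_pbasis) simp
        ultimately have "pbasis (fst g, snd g @ r) \<in> S"
          using S unfolding rsub_def by metis
        then show "pbasis qq \<in> S" using e by simp
      qed
      have "(\<lambda>p. if p \<in> ?F then x p else 0) = x" by auto
      then show "x \<in> S" using rsub_partial_sums[OF S fin \<open>\<forall>q\<in>?F. pbasis q \<in> S\<close>, of x] by simp
    qed
  qed
qed



lemma evkQ_Pref:
  assumes "v \<in> V"
  shows "evkQ V A s t v = (Pref V A s t {(v, [])} :: (('v,'a) path \<Rightarrow> 'k::field) set)"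
proof
  show "evkQ V A s t v \<subseteq> (Pref V A s t {(v, [])} :: (('v,'a) path \<Rightarrow> 'k::field) set)"
  proof
    fix x :: "('v,'a) path \<Rightarrow> 'k" assume "x \<in> evkQ V A s t v"
    then obtain y where y: "y \<in> kQ V A s t" and x: "x = (\<lambda>r. if fst r = v then y r else 0)"
      by (auto simp: evkQ_def pmult_left_unit)
    have "x \<in> kQ V A s t"
    proof (rule kQ_I)
      have "{p. x p \<noteq> 0} \<subseteq> {p. y p \<noteq> 0}" using x by auto
      then show "finite {p. x p \<noteq> 0}" using supp_finite_kQ[OF y] finite_subset by blast
      fix p assume "x p \<noteq> 0"
      then have "y p \<noteq> 0" using x by (auto split: if_splits)
      then show "is_path V A s t p" using kQ_path[OF y] by blast
    qed
    moreover have "\<forall>q. x q \<noteq> 0 \<longrightarrow> (\<exists>g\<in>{(v, [])}. \<exists>r. q = (fst g, snd g @ r))"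
      using x by (auto split: if_splits)
    ultimately show "x \<in> Pref V A s t {(v, [])}" unfolding Pref_iff by blast
  qed
  show "(Pref V A s t {(v, [])} :: (('v,'a) path \<Rightarrow> 'k::field) set) \<subseteq> evkQ V A s t v"
  proof
    fix x :: "('v,'a) path \<Rightarrow> 'k" assume x: "x \<in> Pref V A s t {(v, [])}"
    then have k: "x \<in> kQ V A s t" and h: "\<forall>q. x q \<noteq> 0 \<longrightarrow> fst q = v"
      unfolding Pref_iff by auto
    have "x = pmult t (pbasis (v, [])) x"
      unfolding pmult_left_unit using h by (metis)
    then show "x \<in> evkQ V A s t v" using k unfolding evkQ_def by blast
  qed
qed

lemma simple_cycle_exists:
  assumes "cyclic_vertex V A s t v"
  shows "\<exists>as. simple_cycle V A s t v as"
proof -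
  let ?Q = "\<lambda>n. \<exists>as. is_path V A s t (v, as) \<and> as \<noteq> [] \<and> pend t (v, as) = v \<and> length as = n"
  have "\<exists>n. ?Q n" using assms unfolding cyclic_vertex_def by blast
  then obtain n where Qn: "?Q n" and min: "\<forall>m<n. \<not> ?Q m" using exists_least_iff[of ?Q] by blast
  then obtain as where p: "is_path V A s t (v, as)" and ne: "as \<noteq> []" and c: "pend t (v, as) = v"
    and ln: "length as = n" by blast
  have "distinct (map s as)"
  proof (rule ccontr)
    assume "\<not> distinct (map s as)"
    then obtain i j where ij: "i < j" "j < length as" "s (as ! i) = s (as ! j)"
      unfolding distinct_conv_nth by (auto simp: nat_neq_iff)
    let ?as = "take i as @ drop j as"
    have w: "walk s t v as" "v \<in> V" "set as \<subseteq> A" using p by (auto simp: is_path_walk)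
    have wi: "walk s t v (take i as)" using w(1) walk_append[of s t v "take i as" "drop i as"] by simp
    have wj: "walk s t (pend t (v, take j as)) (drop j as)"
      using w(1) walk_append[of s t v "take j as" "drop j as"] by simp
    have ei: "pend t (v, take i as) = pend t (v, take j as)"
      using pend_take[OF w(1)] ij by simp
    have "walk s t v ?as" using wi wj ei by (simp add: walk_append)
    moreover have "set ?as \<subseteq> A" using w(3) set_take_subset set_drop_subset by fastforce
    ultimately have "is_path V A s t (v, ?as)" using w(2) by (simp add: is_path_walk)
    moreover have "?as \<noteq> []" using ij by simp
    moreover have "pend t (v, ?as) = v"
    proof -
      have "pend t (v, ?as) = pend t (pend t (v, take j as), drop j as)" by (simp add: pend_append ei)
      also have "\<dots> = pend t (v, take j as @ drop j as)" by (simp only: pend_append)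
      finally show ?thesis using c by simp
    qed
    moreover have "length ?as < n" using ij ln by auto
    ultimately show False using min by blast
  qed
  then show ?thesis using p ne c unfolding simple_cycle_def by blast
qed

lemma simple_cycle_noprefix:
  assumes c1: "simple_cycle V A s t v c1" and c2: "simple_cycle V A s t v c2" and e: "c1 = c2 @ r"
  shows "r = []"
proof (rule ccontr)
  assume r: "r \<noteq> []"
  have w1: "walk s t v c1" and d: "distinct (map s c1)" and n1: "c1 \<noteq> []"
    using c1 by (auto simp: simple_cycle_def is_path_walk)
  have "pend t (v, c2) = v" and n2: "c2 \<noteq> []" using c2 by (auto simp: simple_cycle_def)
  then have "walk s t v r" using w1 e by (simp add: walk_append)
  then have "s (hd r) = v" using r by (cases r) auto
  then have a: "s (c1 ! length c2) = v" using e r by (simp add: nth_append hd_conv_nth)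
  have b: "s (c1 ! 0) = v" using w1 n1 by (cases c1) auto
  have "length c2 < length c1" using e r by simp
  then have "map s c1 ! length c2 = map s c1 ! 0" using a b n1 by simp
  moreover have "map s c1 ! length c2 \<noteq> map s c1 ! 0"
    using d n2 n1 \<open>length c2 < length c1\<close> unfolding distinct_conv_nth
    by (metis length_greater_0_conv length_map length_0_conv)
  ultimately show False by blast
qed

lemma concat_map_inj:
  assumes "\<not> (\<exists>r. f True = f False @ r)" "\<not> (\<exists>r. f False = f True @ r)"
  shows "length w1 = length w2 \<Longrightarrow> concat (map f w1) = concat (map f w2) \<Longrightarrow> w1 = w2"
proof (induction w1 arbitrary: w2)
  case Nil then show ?case by simp
next
  case (Cons b1 w1)
  then obtain b2 w2' where w2: "w2 = b2 # w2'" by (cases w2) auto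
  have eq: "f b1 @ concat (map f w1) = f b2 @ concat (map f w2')" using Cons.prems w2 by simp
  have "b1 = b2"
  proof (rule ccontr)
    assume "b1 \<noteq> b2"
    then show False using eq assms unfolding append_eq_append_conv2
      by (cases b1; cases b2) (auto, (metis)+)
  qed
  then show ?case using eq Cons w2 by simp
qed



lemma ratio_limit: "(L::real) > 0 \<Longrightarrow> filterlim (\<lambda>n::nat. (real n / L - 1) * ln 2 / ln (real n)) at_top sequentially"
  by real_asymp

lemma cycle_unique:
  assumes fV: "finite V" and fA: "finite A" and gk: "gk_dim V A s t < \<infinity>"
    and c1: "simple_cycle V A s t v c1" and c2: "simple_cycle V A s t v c2"
  shows "c1 = c2"
proof (rule ccontr)
  assume ne: "c1 \<noteq> c2"
  define f where "f = (\<lambda>b::bool. if b then c1 else c2)"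
  have np1: "\<not> (\<exists>r. f True = f False @ r)"
    using simple_cycle_noprefix[OF c1 c2] ne unfolding f_def by auto
  have np2: "\<not> (\<exists>r. f False = f True @ r)"
    using simple_cycle_noprefix[OF c2 c1] ne unfolding f_def by auto
  define Lm where "Lm = max (length c1) (length c2)"
  have Lm: "Lm \<ge> 1" using c1 unfolding Lm_def simple_cycle_def by (cases c1) auto
  have wc: "\<And>b. walk s t v (f b) \<and> pend t (v, f b) = v \<and> set (f b) \<subseteq> A \<and> length (f b) \<le> Lm"
    using c1 c2 unfolding f_def simple_cycle_def Lm_def by (auto simp: is_path_walk)
  have vV: "v \<in> V" using c1 by (simp add: simple_cycle_def is_path_def)
  have wcat: "walk s t v (concat (map f w)) \<and> pend t (v, concat (map f w)) = v \<and>
              set (concat (map f w)) \<subseteq> A \<and> length (concat (map f w)) \<le> length w * Lm" for w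
  proof (induction w)
    case Nil then show ?case by simp
  next
    case (Cons b w)
    then show ?case using wc[of b] by (auto simp: walk_append pend_append)
  qed
  define P where "P n = {p. is_path V A s t p \<and> plen p \<le> n}" for n
  have finP: "finite (P n)" for n
  proof -
    have "P n \<subseteq> V \<times> {xs. set xs \<subseteq> A \<and> length xs \<le> n}"
      by (auto simp: P_def is_path_def plen_def)
    then show ?thesis using fV finite_lists_length_le[OF fA] by (meson finite_SigmaI finite_subset)
  qed
  have cardP: "card (P n) \<ge> 2 ^ (n div Lm)" for n
  proof -
    let ?k = "n div Lm"
    let ?g = "\<lambda>w. (v, concat (map f w))"
    have inj: "inj_on ?g {w. length w = ?k}"
      by (auto simp: inj_on_def intro: concat_map_inj[OF np1 np2])
    have sub: "?g ` {w. length w = ?k} \<subseteq> P n"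
    proof
      fix p assume "p \<in> ?g ` {w. length w = ?k}"
      then obtain w where w: "length w = ?k" "p = ?g w" by blast
      have "length (concat (map f w)) \<le> ?k * Lm" using wcat[of w] w by simp
      also have "\<dots> \<le> n" by simp
      finally show "p \<in> P n" using wcat[of w] w vV by (simp add: P_def is_path_walk plen_def)
    qed
    have "card {w::bool list. length w = ?k} = 2 ^ ?k"
      using card_lists_length_eq[of "UNIV :: bool set" ?k] by simp
    then have "card (?g ` {w. length w = ?k}) = 2 ^ ?k" using card_image[OF inj] by simp
    then show ?thesis using card_mono[OF finP sub] by simp
  qed
  define R where "R n = ln (real (card (P n))) / ln (real n)" for n
  have lower: "eventually (\<lambda>n. (real n / real Lm - 1) * ln 2 / ln (real n) \<le> R n) sequentially"
  proof (rule eventually_sequentiallyI[of 2])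
    fix n :: nat assume n: "n \<ge> 2"
    have lnpos: "ln (real n) > 0" using n by simp
    have kb: "real n / real Lm - 1 \<le> real (n div Lm)"
    proof -
      have "real n = real Lm * real (n div Lm) + real (n mod Lm)"
        by (metis of_nat_add of_nat_mult div_mult_mod_eq mult.commute)
      moreover have "real (n mod Lm) < real Lm" using Lm by simp
      ultimately have "real n < real Lm * (real (n div Lm) + 1)" by (simp add: algebra_simps)
      then have "real n / real Lm < real (n div Lm) + 1" using Lm by (simp add: field_simps)
      then show ?thesis by simp
    qed
    have "(real n / real Lm - 1) * ln 2 \<le> real (n div Lm) * ln 2"
      using kb by (simp add: mult_right_mono)
    also have "\<dots> = ln ((2::real) ^ (n div Lm))" by (simp add: ln_realpow)
    also have "\<dots> \<le> ln (real (card (P n)))"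
    proof -
      have "(2::real) ^ (n div Lm) \<le> real (card (P n))"
        using cardP[of n] by (metis numeral_power_le_of_nat_cancel_iff)
      then show ?thesis by (intro ln_mono) auto
    qed
    finally show "(real n / real Lm - 1) * ln 2 / ln (real n) \<le> R n"
      unfolding R_def using lnpos by (simp add: divide_right_mono)
  qed
  have "filterlim R at_top sequentially"
    by (rule filterlim_at_top_mono[OF ratio_limit lower]) (use Lm in simp)
  then have "((\<lambda>n. ereal (R n)) \<longlongrightarrow> \<infinity>) sequentially"
    by (simp add: tendsto_PInfty_eq_at_top)
  then have "limsup (\<lambda>n. ereal (R n)) = \<infinity>"
    by (rule lim_imp_Limsup[OF trivial_limit_sequentially])
  then have "gk_dim V A s t = \<infinity>" unfolding gk_dim_def R_def P_def by simp
  then show False using gk by simp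
qed



definition Gs :: "'a set \<Rightarrow> ('a \<Rightarrow> 'v) \<Rightarrow> 'v \<Rightarrow> 'a list \<Rightarrow> ('v,'a) path set" where
  "Gs A s v p = {(v, cpow p m @ take i p @ [b]) | m i b. i < length p \<and> b \<in> A \<and> s b = s (p ! i) \<and> b \<noteq> p ! i}"

lemma O_gens_eq: "O_gens V A s t v = pbasis ` Gs A s v (the_cycle V A s t v)"
  unfolding O_gens_def Gs_def Let_def cpow_def by auto

lemma Gs_paths:
  assumes v: "v \<in> V" and w: "walk s t v p" and c: "pend t (v, p) = v" and A: "set p \<subseteq> A"
  shows "\<forall>g\<in>Gs A s v p. is_path V A s t g"
proof
  fix g assume "g \<in> Gs A s v p"
  then obtain m i b where g: "g = (v, cpow p m @ take i p @ [b])" and i: "i < length p"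
    and b: "b \<in> A" "s b = s (p ! i)" by (auto simp: Gs_def)
  have wc: "walk s t v (cpow p m) \<and> pend t (v, cpow p m) = v" using walk_cpow[OF w c] .
  have wt: "walk s t v (take i p)" using w walk_append[of s t v "take i p" "drop i p"] by simp
  have pt: "pend t (v, take i p) = s (p ! i)" using pend_take[OF w i] .
  have "walk s t v (cpow p m @ take i p @ [b])"
    using wc wt pt b by (simp add: walk_append pend_append)
  moreover have "set (cpow p m @ take i p @ [b]) \<subseteq> A"
    using set_cpow[of p m] A b set_take_subset[of i p] by auto
  ultimately show "is_path V A s t g" using g v by (simp add: is_path_walk)
qed

lemma dichotomy:
  assumes w: "walk s t v p" and c: "pend t (v, p) = v" and pne: "p \<noteq> []"
    and wl: "walk s t v l" and Al: "set l \<subseteq> A"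
  shows "(\<exists>g\<in>Gs A s v p. \<exists>r. (v, l) = (fst g, snd g @ r)) \<or> (\<forall>j<length l. l ! j = p ! (j mod length p))"
proof (cases "\<forall>j<length l. l ! j = p ! (j mod length p)")
  case True then show ?thesis by blast
next
  case False
  let ?B = "\<lambda>j. j < length l \<and> l ! j \<noteq> p ! (j mod length p)"
  have "\<exists>j. ?B j" using False by blast
  then obtain j where Bj: "?B j" and min: "\<forall>j'<j. \<not> ?B j'" using exists_least_iff[of ?B] by blast
  define L where "L = length p"
  have L: "L > 0" using pne by (simp add: L_def)
  define m where "m = j div L"
  define i where "i = j mod L"
  define b where "b = l ! j"
  have i: "i < L" using L by (simp add: i_def)
  have jmi: "j = m * L + i" by (simp add: m_def i_def)
  have tk: "take j l = cpow p m @ take i p"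
  proof (rule nth_equalityI)
    show "length (take j l) = length (cpow p m @ take i p)" using Bj jmi i by (simp add: L_def)
    fix idx assume "idx < length (take j l)"
    then have idx: "idx < j" "idx < length l" by auto
    have "take j l ! idx = p ! (idx mod L)" using min idx by (auto simp: L_def)
    also have "\<dots> = (cpow p m @ take i p @ [b]) ! idx"
      using nth_gen[of i p idx m b] i idx jmi by (simp add: L_def)
    also have "\<dots> = (cpow p m @ take i p) ! idx"
    proof -
      have l: "idx < length (cpow p m @ take i p)" using idx jmi i by (simp add: L_def)
      show ?thesis using nth_append[of "cpow p m @ take i p" "[b]" idx] l by simp
    qed
    finally show "take j l ! idx = (cpow p m @ take i p) ! idx" .
  qed
  have tk1: "take (Suc j) l = cpow p m @ take i p @ [b]"
    using tk Bj by (simp add: take_Suc_conv_app_nth b_def)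
  have sb: "s b = s (p ! i)"
  proof -
    have "s b = pend t (v, take j l)" using pend_take[OF wl] Bj by (simp add: b_def)
    also have "\<dots> = pend t (pend t (v, cpow p m), take i p)" by (simp add: tk pend_append)
    also have "\<dots> = pend t (v, take i p)" using walk_cpow[OF w c] by simp
    also have "\<dots> = s (p ! i)" using pend_take[OF w] i by (simp add: L_def)
    finally show ?thesis .
  qed
  have bA: "b \<in> A" using Al Bj by (auto simp: b_def)
  have bne: "b \<noteq> p ! i" using Bj by (simp add: b_def i_def L_def)
  have "(v, cpow p m @ take i p @ [b]) \<in> Gs A s v p"
    using i bA sb bne unfolding Gs_def L_def by blast
  moreover have "(v, l) = (v, (cpow p m @ take i p @ [b]) @ drop (Suc j) l)"
    using tk1 by (metis append_take_drop_id)
  ultimately show ?thesis by force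
qed

lemma periodic_eq_cpow:
  assumes "\<forall>j<length l. l ! j = p ! (j mod length p)" "length l = k * length p"
  shows "l = cpow p k"
  by (rule nth_equalityI) (use assms in \<open>auto simp: nth_cpow\<close>)

lemma cpow_not_Gs:
  assumes pne: "p \<noteq> []"
  shows "\<not> (\<exists>g\<in>Gs A s v p. \<exists>r. (v, cpow p k) = (fst g, snd g @ r))"
proof
  assume "\<exists>g\<in>Gs A s v p. \<exists>r. (v, cpow p k) = (fst g, snd g @ r)"
  then obtain m i b r where i: "i < length p" and bne: "b \<noteq> p ! i"
    and e: "cpow p k = (cpow p m @ take i p @ [b]) @ r"
    by (auto simp: Gs_def)
  let ?j = "m * length p + i"
  have lt: "?j < length (cpow p k)" using e i by simp
  have "cpow p k ! ?j = b" using e i by (simp add: nth_append)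
  moreover have "cpow p k ! ?j = p ! (?j mod length p)"
    using lt by (intro nth_cpow) simp
  moreover have "?j mod length p = i" using i by simp
  ultimately show False using bne by simp
qed



lemma pdiff_self: "pdiff x x = pzero"
  by (rule ext) (simp add: pdiff_def pzero_def)

lemma torsion_self: "rsub V A s t S \<Longrightarrow> torsion_quot V A s t S S"
  unfolding torsion_quot_def rsub_def by blast

lemma Pref_start:
  assumes "\<forall>g\<in>P. fst g = v"
  shows "Pref V A s t P \<subseteq> Pref V A s t {(v, [])}"
proof
  fix x assume x: "x \<in> Pref V A s t P"
  have "\<forall>q. x q \<noteq> 0 \<longrightarrow> (\<exists>g\<in>{(v, [])}. \<exists>r. q = (fst g, snd g @ r))"
  proof (intro allI impI)
    fix q assume "x q \<noteq> 0"
    then obtain g r where "g \<in> P" "q = (fst g, snd g @ r)" using x unfolding Pref_iff by blast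
    then show "\<exists>g\<in>{(v, [])}. \<exists>r. q = (fst g, snd g @ r)" using assms by auto
  qed
  then show "x \<in> Pref V A s t {(v, [])}" using x unfolding Pref_iff by blast
qed

lemma path_cpow:
  assumes "v \<in> V" "walk s t v p" "pend t (v, p) = v" "set p \<subseteq> A"
  shows "is_path V A s t (v, cpow p k)"
  using assms walk_cpow[of s t v p k] set_cpow[of p k] by (auto simp: is_path_walk)

lemma dir_nonzero:
  assumes q: "quiver V A s t" and v: "v \<in> V" and w: "walk s t v p" and c: "pend t (v, p) = v"
    and pne: "p \<noteq> []" and pA: "set p \<subseteq> A"
  shows "qgr_hom_nonzero V A s t
           (Pref V A s t {(v, [])} :: (('v,'a) path \<Rightarrow> 'k::field) set, Pref V A s t (Gs A s v p))
           (Pref V A s t {(v, [])}, Pref V A s t (Gs A s v p))"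
proof -
  let ?E = "Pref V A s t {(v, [])} :: (('v,'a) path \<Rightarrow> 'k::field) set"
  let ?G = "Pref V A s t (Gs A s v p) :: (('v,'a) path \<Rightarrow> 'k::field) set"
  have rE: "rsub V A s t ?E" and gE: "gsub V A s t ?E" using Pref_rsub[OF q] Pref_gsub[OF q] by auto
  have rG: "rsub V A s t ?G" and gG: "gsub V A s t ?G" using Pref_rsub[OF q] Pref_gsub[OF q] by auto
  have GE: "?G \<subseteq> ?E" by (rule Pref_start) (auto simp: Gs_def)
  have pz: "pzero \<in> ?G" using rG by (simp add: rsub_def)
  have hom: "gr_hom V A s t (?E, ?G) (?E, ?G) id"
    unfolding gr_hom_def fst_conv snd_conv id_def
  proof (intro conjI)
    show "\<forall>x\<in>?E. x \<in> ?E" by blast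
    show "\<forall>x\<in>?G. x \<in> ?G" by blast
    show "\<forall>x\<in>?E. \<forall>y\<in>?E. pdiff (padd x y) (padd x y) \<in> ?G" by (simp only: pdiff_self pz) blast
    show "\<forall>c. \<forall>x\<in>?E. pdiff (smult c x) (smult c x) \<in> ?G" by (simp only: pdiff_self pz) blast
    show "\<forall>x\<in>?E. \<forall>y\<in>kQ V A s t. pdiff (pmult t x y) (pmult t x y) \<in> ?G" by (simp only: pdiff_self pz) blast
    show "\<forall>d. \<forall>x\<in>?E. homog d x \<longrightarrow> (\<exists>z\<in>?E. homog d z \<and> pdiff x z \<in> ?G)"
    proof (intro allI ballI impI)
      fix d x assume "x \<in> ?E" "homog d x"
      moreover have "pdiff x x \<in> ?G" by (simp only: pdiff_self pz)
      ultimately show "\<exists>z\<in>?E. homog d z \<and> pdiff x z \<in> ?G" by blast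
    qed
  qed
  have e: "pbasis (v, []) \<in> ?E" by (rule pbasis_Pref) (use v in \<open>auto simp: is_path_def\<close>)
  have main: "\<exists>x\<in>M''. id x \<notin> N''"
    if M'': "torsion_quot V A s t ?E M''" and N'': "torsion_quot V A s t N'' ?G"
    for M'' N'' :: "(('v,'a) path \<Rightarrow> 'k) set"
  proof -
    obtain n where n: "\<forall>y\<in>kQ V A s t. (\<forall>r. y r \<noteq> 0 \<longrightarrow> n \<le> plen r) \<longrightarrow> pmult t (pbasis (v, [])) y \<in> M''"
      using M'' e unfolding torsion_quot_def by blast
    let ?u = "pbasis (v, cpow p n) :: ('v,'a) path \<Rightarrow> 'k"
    have uk: "?u \<in> kQ V A s t" by (rule kQ_pbasis[OF path_cpow[OF v w c pA]])
    have "n \<le> n * length p" using pne by (cases p) auto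
    then have "\<forall>r. ?u r \<noteq> 0 \<longrightarrow> n \<le> plen r" by (simp add: pbasis_def plen_def)
    then have "pmult t (pbasis (v, [])) ?u \<in> M''" using n uk by blast
    moreover have "pmult t (pbasis (v, [])) ?u = ?u" using pmult_pbasis[of t "(v, [])" "(v, cpow p n)"] by simp
    ultimately have uM: "?u \<in> M''" by simp
    have "?u \<notin> N''"
    proof
      assume "?u \<in> N''"
      then obtain n' where n': "\<forall>y\<in>kQ V A s t. (\<forall>r. y r \<noteq> 0 \<longrightarrow> n' \<le> plen r) \<longrightarrow> pmult t ?u y \<in> ?G"
        using N'' unfolding torsion_quot_def by blast
      let ?y = "pbasis (v, cpow p n') :: ('v,'a) path \<Rightarrow> 'k"
      have yk: "?y \<in> kQ V A s t" by (rule kQ_pbasis[OF path_cpow[OF v w c pA]])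
      have "n' \<le> n' * length p" using pne by (cases p) auto
      then have "\<forall>r. ?y r \<noteq> 0 \<longrightarrow> n' \<le> plen r" by (simp add: pbasis_def plen_def)
      then have "pmult t ?u ?y \<in> ?G" using n' yk by blast
      moreover have "pmult t ?u ?y = pbasis (v, cpow p (n + n'))"
        using pmult_pbasis[of t "(v, cpow p n)" "(v, cpow p n')"] walk_cpow[OF w c] by (simp add: cpow_add)
      ultimately have "pbasis (v, cpow p (n + n')) \<in> ?G" by simp
      then have H: "\<forall>q. pbasis (v, cpow p (n + n')) q \<noteq> (0::'k) \<longrightarrow> (\<exists>g\<in>Gs A s v p. \<exists>r. q = (fst g, snd g @ r))"
        unfolding Pref_iff by (rule conjunct2)
      have "pbasis (v, cpow p (n + n')) (v, cpow p (n + n')) \<noteq> (0::'k)"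
        by (simp add: pbasis_def)
      then have "\<exists>g\<in>Gs A s v p. \<exists>r. (v, cpow p (n + n')) = (fst g, snd g @ r)"
        using H by blast
      then show False using cpow_not_Gs[OF pne, of A s v "n + n'"] by simp
    qed
    then show ?thesis using uM by auto
  qed
  show ?thesis
    unfolding qgr_hom_nonzero_def fst_conv snd_conv
  proof (rule exI[of _ ?E], rule exI[of _ ?G], rule exI[of _ id], intro conjI allI impI)
    show "gsub V A s t ?E" by (rule gE)
    show "?G \<subseteq> ?E" by (rule GE)
    show "?E \<subseteq> ?E" by simp
    show "torsion_quot V A s t ?E ?E" by (rule torsion_self[OF rE])
    show "gsub V A s t ?G" by (rule gG)
    show "?G \<subseteq> ?G" by simp
    show "?G \<subseteq> ?E" by (rule GE)
    show "torsion_quot V A s t ?G ?G" by (rule torsion_self[OF rG])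
    show "gr_hom V A s t (?E, ?G) (?E, ?G) id" by (rule hom)
    fix M'' N'' :: "(('v,'a) path \<Rightarrow> 'k) set"
    assume H: "gsub V A s t M'' \<and> ?G \<subseteq> M'' \<and> M'' \<subseteq> ?E \<and> torsion_quot V A s t ?E M'' \<and>
          gsub V A s t N'' \<and> ?G \<subseteq> N'' \<and> N'' \<subseteq> ?E \<and> torsion_quot V A s t N'' ?G"
    show "\<exists>x\<in>M''. id x \<notin> N''" using main H by blast
  qed
qed



lemma padd_pdiff: "padd (pdiff a b) b = a"
  by (rule ext) (simp add: padd_def pdiff_def)

lemma rsub_combine: "rsub V A s t S \<Longrightarrow> pdiff a b \<in> S \<Longrightarrow> b \<in> S \<Longrightarrow> a \<in> S"
  unfolding rsub_def by (metis padd_pdiff)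

lemma dir_zero:
  assumes q: "quiver V A s t" and v: "v \<in> V" and w: "w \<in> V" and vw: "v \<noteq> w"
    and wv: "walk s t v pv" and cv: "pend t (v, pv) = v" and nv: "pv \<noteq> []" and Av: "set pv \<subseteq> A"
    and ww: "walk s t w pw" and cw: "pend t (w, pw) = w" and nw: "pw \<noteq> []" and Aw: "set pw \<subseteq> A"
  shows "\<not> qgr_hom_nonzero V A s t
           (Pref V A s t {(v, [])} :: (('v,'a) path \<Rightarrow> 'k::field) set, Pref V A s t (Gs A s v pv))
           (Pref V A s t {(w, [])}, Pref V A s t (Gs A s w pw))"
proof
  let ?Ev = "Pref V A s t {(v, [])} :: (('v,'a) path \<Rightarrow> 'k::field) set"
  let ?Gv = "Pref V A s t (Gs A s v pv) :: (('v,'a) path \<Rightarrow> 'k::field) set"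
  let ?Ew = "Pref V A s t {(w, [])} :: (('v,'a) path \<Rightarrow> 'k::field) set"
  let ?Gw = "Pref V A s t (Gs A s w pw) :: (('v,'a) path \<Rightarrow> 'k::field) set"
  assume "qgr_hom_nonzero V A s t (?Ev, ?Gv) (?Ew, ?Gw)"
  then obtain M' N' f where
    gM': "gsub V A s t M'" and sM: "?Gv \<subseteq> M'" and M'E: "M' \<subseteq> ?Ev" and tM': "torsion_quot V A s t ?Ev M'"
    and gN': "gsub V A s t N'" and sN: "?Gw \<subseteq> N'" and N'E: "N' \<subseteq> ?Ew" and tN': "torsion_quot V A s t N' ?Gw"
    and hom: "gr_hom V A s t (M', ?Gv) (?Ew, N') f"
    and all: "\<forall>M'' N''.
          gsub V A s t M'' \<and> ?Gv \<subseteq> M'' \<and> M'' \<subseteq> M' \<and> torsion_quot V A s t ?Ev M'' \<and>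
          gsub V A s t N'' \<and> N' \<subseteq> N'' \<and> N'' \<subseteq> ?Ew \<and> torsion_quot V A s t N'' ?Gw
          \<longrightarrow> (\<exists>x\<in>M''. f x \<notin> N'')"
    unfolding qgr_hom_nonzero_def fst_conv snd_conv by blast
  have h2: "\<forall>x\<in>?Gv. f x \<in> N'"
    and h3: "\<forall>x\<in>M'. \<forall>y\<in>M'. pdiff (f (padd x y)) (padd (f x) (f y)) \<in> N'"
    and h4: "\<forall>c. \<forall>x\<in>M'. pdiff (f (smult c x)) (smult c (f x)) \<in> N'"
    and h5: "\<forall>x\<in>M'. \<forall>y\<in>kQ V A s t. pdiff (f (pmult t x y)) (pmult t (f x) y) \<in> N'"
    and h6: "\<forall>d. \<forall>x\<in>M'. homog d x \<longrightarrow> (\<exists>z\<in>?Ew. homog d z \<and> pdiff (f x) z \<in> N')"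
    using hom unfolding gr_hom_def fst_conv snd_conv by blast+
  have rM': "rsub V A s t M'" and rN': "rsub V A s t N'" using gM' gN' by (auto simp: gsub_def)
  have rGv: "rsub V A s t ?Gv" by (rule Pref_rsub[OF q])
  define ev :: "('v,'a) path \<Rightarrow> 'k" where "ev = pbasis (v, [])"
  have evp: "is_path V A s t (v, [])" using v by (simp add: is_path_def)
  have evE: "ev \<in> ?Ev" unfolding ev_def by (rule pbasis_Pref[OF evp]) simp
  have evk: "ev \<in> kQ V A s t" unfolding ev_def by (rule kQ_pbasis[OF evp])
  obtain n0 where n0: "\<forall>y\<in>kQ V A s t. (\<forall>r. y r \<noteq> 0 \<longrightarrow> n0 \<le> plen r) \<longrightarrow> pmult t ev y \<in> M'"
    using tM' evE unfolding torsion_quot_def by blast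
  define K where "K = length pw * Suc n0"
  define qq where "qq = (v, cpow pv K)"
  define u :: "('v,'a) path \<Rightarrow> 'k" where "u = pbasis qq"
  have qqp: "is_path V A s t qq" unfolding qq_def by (rule path_cpow[OF v wv cv Av])
  have uk: "u \<in> kQ V A s t" unfolding u_def by (rule kQ_pbasis[OF qqp])
  have pendqq: "pend t qq = v" unfolding qq_def using walk_cpow[OF wv cv] by simp
  have Klen: "n0 \<le> K * length pv"
  proof -
    have a: "Suc n0 \<le> K" using nw unfolding K_def by (cases pw) auto
    have b: "1 \<le> length pv" using nv by (cases pv) auto
    have c: "K * 1 \<le> K * length pv" using b by (rule mult_le_mono2)
    show ?thesis using a c by (simp only: mult_1_right)
  qed
  have uM': "u \<in> M'"
  proof -
    have "\<forall>r. u r \<noteq> 0 \<longrightarrow> n0 \<le> plen r" using Klen by (simp add: u_def pbasis_def plen_def qq_def)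
    then have "pmult t ev u \<in> M'" using n0 uk by blast
    moreover have "pmult t ev u = u"
      unfolding ev_def u_def using pmult_pbasis[of t "(v, [])" qq] by (simp add: qq_def)
    ultimately show ?thesis by simp
  qed
  have fu: "f u \<in> N'"
  proof -
    have "pmult t u ev = u"
      unfolding ev_def u_def using pmult_pbasis[of t qq "(v, [])"] pendqq by simp
    then have d1: "pdiff (f u) (pmult t (f u) ev) \<in> N'" using h5 uM' evk by metis
    define D where "D = K * length pv"
    have "homog D u" by (simp add: homog_def u_def pbasis_def plen_def qq_def D_def)
    then obtain z where zE: "z \<in> ?Ew" and hz: "homog D z" and dz: "pdiff (f u) z \<in> N'"
      using h6 uM' by blast
    have "pmult t (pdiff (f u) z) ev \<in> N'" using rN' dz evk unfolding rsub_def by blast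
    then have d2: "pdiff (pmult t (f u) ev) (pmult t z ev) \<in> N'" by (simp add: pmult_pdiff_left)
    have zk: "z \<in> kQ V A s t" and zs: "\<forall>r. z r \<noteq> 0 \<longrightarrow> fst r = w"
      using zE unfolding Pref_iff by auto
    have d3: "pmult t z ev \<in> ?Gw"
    proof -
      have "pmult t z ev \<in> kQ V A s t" by (rule kQ_pmult[OF q zk evk])
      moreover have "\<exists>g\<in>Gs A s w pw. \<exists>rr. r = (fst g, snd g @ rr)" if nz: "pmult t z ev r \<noteq> 0" for r
      proof -
        have pr: "pend t r = v" and zr: "z r \<noteq> 0"
          using nz unfolding ev_def pmult_right_unit by (auto split: if_splits)
        have fr: "fst r = w" using zs zr by blast
        have lr: "length (snd r) = D" using hz zr unfolding homog_def plen_def by blast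
        have "is_path V A s t r" using kQ_path[OF zk zr] .
        then have wr: "walk s t w (snd r)" and Ar: "set (snd r) \<subseteq> A"
          using fr by (auto simp: is_path_walk')
        have re: "r = (w, snd r)" using fr by (metis prod.collapse)
        show ?thesis
        proof (cases "\<exists>g\<in>Gs A s w pw. \<exists>rr. (w, snd r) = (fst g, snd g @ rr)")
          case True then show ?thesis using re by metis
        next
          case False
          then have per: "\<forall>j<length (snd r). snd r ! j = pw ! (j mod length pw)"
            using dichotomy[OF ww cw nw wr Ar] by blast
          have "length (snd r) = (Suc n0 * length pv) * length pw"
            using lr unfolding D_def K_def by (simp add: algebra_simps)
          then have "snd r = cpow pw (Suc n0 * length pv)" by (rule periodic_eq_cpow[OF per])
          then have "pend t r = w" using re walk_cpow[OF ww cw] by (metis)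
          then show ?thesis using pr vw by simp
        qed
      qed
      ultimately show ?thesis unfolding Pref_iff by blast
    qed
    have "pmult t (f u) ev \<in> N'" using rsub_combine[OF rN' d2] d3 sN by blast
    then show ?thesis using rsub_combine[OF rN' d1] by blast
  qed
  define P'' where "P'' = Gs A s v pv \<union> {qq}"
  define M'' :: "(('v,'a) path \<Rightarrow> 'k) set" where "M'' = Pref V A s t P''"
  have P''p: "\<forall>g\<in>P''. is_path V A s t g" using Gs_paths[OF v wv cv Av] qqp by (auto simp: P''_def)
  have M''eq: "M'' = gen_rsub V A s t (pbasis ` P'')"
    unfolding M''_def by (rule gen_rsub_Pref[OF q P''p, symmetric])
  have genM': "pbasis ` P'' \<subseteq> M'"
  proof
    fix x :: "('v,'a) path \<Rightarrow> 'k" assume "x \<in> pbasis ` P''"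
    then obtain g where g: "g \<in> P''" "x = pbasis g" by blast
    show "x \<in> M'"
    proof (cases "g = qq")
      case True then show ?thesis using g uM' by (simp add: u_def)
    next
      case False
      then have "g \<in> Gs A s v pv" using g by (simp add: P''_def)
      then have "x \<in> ?Gv" using g P''p pbasis_Pref by (metis P''_def UnI1)
      then show ?thesis using sM by blast
    qed
  qed
  have M''M': "M'' \<subseteq> M'" unfolding M''eq gen_rsub_def using rM' genM' by blast
  have gM'': "gsub V A s t M''" unfolding M''_def by (rule Pref_gsub[OF q])
  have GvM'': "?Gv \<subseteq> M''" unfolding M''_def P''_def by (rule Pref_mono) blast
  have tM'': "torsion_quot V A s t ?Ev M''"
    unfolding torsion_quot_def
  proof
    fix x :: "('v,'a) path \<Rightarrow> 'k" assume xE: "x \<in> ?Ev"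
    have xk: "x \<in> kQ V A s t" and xs: "\<forall>r. x r \<noteq> 0 \<longrightarrow> fst r = v"
      using xE unfolding Pref_iff by auto
    show "\<exists>n. \<forall>y\<in>kQ V A s t. (\<forall>r. y r \<noteq> 0 \<longrightarrow> n \<le> plen r) \<longrightarrow> pmult t x y \<in> M''"
    proof (intro exI[of _ "K * length pv"] ballI impI)
      fix y :: "('v,'a) path \<Rightarrow> 'k" assume yk: "y \<in> kQ V A s t" and yl: "\<forall>r. y r \<noteq> 0 \<longrightarrow> K * length pv \<le> plen r"
      have "pmult t x y \<in> kQ V A s t" by (rule kQ_pmult[OF q xk yk])
      moreover have "\<exists>g\<in>P''. \<exists>rr. r = (fst g, snd g @ rr)" if nz: "pmult t x y r \<noteq> 0" for r
      proof -
        obtain k where k: "k \<le> length (snd r)" and x0: "x (fst r, take k (snd r)) \<noteq> 0"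
          and y0: "y (pend t (fst r, take k (snd r)), drop k (snd r)) \<noteq> 0"
          using pmult_nonzero[OF nz] by blast
        have fr: "fst r = v" using xs x0 by fastforce
        have "K * length pv \<le> length (drop k (snd r))" using yl y0 by (fastforce simp: plen_def)
        then have lr: "K * length pv \<le> length (snd r)" by simp
        have "is_path V A s t r" by (rule kQ_path[OF kQ_pmult[OF q xk yk] nz])
        then have wr: "walk s t v (snd r)" and Ar: "set (snd r) \<subseteq> A"
          using fr by (auto simp: is_path_walk')
        have re: "r = (v, snd r)" using fr by (metis prod.collapse)
        show ?thesis
        proof (cases "\<exists>g\<in>Gs A s v pv. \<exists>rr. (v, snd r) = (fst g, snd g @ rr)")
          case True then show ?thesis using re unfolding P''_def by (metis UnI1)
        next
          case False
          then have per: "\<forall>j<length (snd r). snd r ! j = pv ! (j mod length pv)"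
            using dichotomy[OF wv cv nv wr Ar] by blast
          let ?l = "take (K * length pv) (snd r)"
          have "\<forall>j<length ?l. ?l ! j = pv ! (j mod length pv)" using per by simp
          moreover have "length ?l = K * length pv" using lr by simp
          ultimately have "?l = cpow pv K" by (rule periodic_eq_cpow)
          then have "r = (fst qq, snd qq @ drop (K * length pv) (snd r))"
            using re unfolding qq_def by (metis append_take_drop_id fst_conv snd_conv)
          then show ?thesis unfolding P''_def by blast
        qed
      qed
      ultimately show "pmult t x y \<in> M''" unfolding M''_def Pref_iff by blast
    qed
  qed
  have "\<exists>x\<in>M''. f x \<notin> N'"
    using all gM'' GvM'' M''M' tM'' gN' N'E tN' by blast
  define T where "T = {x \<in> M'. f x \<in> N'}"
  have rT: "rsub V A s t T"
    unfolding rsub_def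
  proof (intro conjI ballI allI)
    show "T \<subseteq> kQ V A s t" using rM' unfolding rsub_def T_def by blast
    have "pzero \<in> ?Gv" using rGv unfolding rsub_def by blast
    then show "pzero \<in> T" using sM h2 unfolding T_def by blast
    fix x :: "('v,'a) path \<Rightarrow> 'k" assume xT: "x \<in> T"
    then have xM: "x \<in> M'" and fx: "f x \<in> N'" by (auto simp: T_def)
    {
      fix y :: "('v,'a) path \<Rightarrow> 'k" assume "y \<in> T"
      then have yM: "y \<in> M'" and fy: "f y \<in> N'" by (auto simp: T_def)
      have "padd (f x) (f y) \<in> N'" using rN' fx fy unfolding rsub_def by blast
      then have "f (padd x y) \<in> N'" using rsub_combine[OF rN'] h3 xM yM by blast
      moreover have "padd x y \<in> M'" using rM' xM yM unfolding rsub_def by blast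
      ultimately show "padd x y \<in> T" by (simp add: T_def)
    }
    {
      fix c
      have "smult c (f x) \<in> N'" using rN' fx unfolding rsub_def by blast
      then have "f (smult c x) \<in> N'" using rsub_combine[OF rN'] h4 xM by blast
      moreover have "smult c x \<in> M'" using rM' xM unfolding rsub_def by blast
      ultimately show "smult c x \<in> T" by (simp add: T_def)
    }
    {
      fix y :: "('v,'a) path \<Rightarrow> 'k" assume yk: "y \<in> kQ V A s t"
      have "pmult t (f x) y \<in> N'" using rN' fx yk unfolding rsub_def by blast
      then have "f (pmult t x y) \<in> N'" using rsub_combine[OF rN'] h5 xM yk by blast
      moreover have "pmult t x y \<in> M'" using rM' xM yk unfolding rsub_def by blast
      ultimately show "pmult t x y \<in> T" by (simp add: T_def)
    }
  qed
  have genT: "pbasis ` P'' \<subseteq> T"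
  proof
    fix x :: "('v,'a) path \<Rightarrow> 'k" assume xP: "x \<in> pbasis ` P''"
    then have xM: "x \<in> M'" using genM' by blast
    from xP obtain g where g: "g \<in> P''" "x = pbasis g" by blast
    have "f x \<in> N'"
    proof (cases "g = qq")
      case True then show ?thesis using g fu by (simp add: u_def)
    next
      case False
      then have "g \<in> Gs A s v pv" using g by (simp add: P''_def)
      then have "x \<in> ?Gv" using g P''p pbasis_Pref by (metis P''_def UnI1)
      then show ?thesis using h2 by blast
    qed
    then show "x \<in> T" using xM by (simp add: T_def)
  qed
  have "M'' \<subseteq> T" unfolding M''eq gen_rsub_def using rT genT by blast
  then show False using \<open>\<exists>x\<in>M''. f x \<notin> N'\<close> unfolding T_def by blast
qed



lemma cyc_facts:
  assumes fV: "finite V" and fA: "finite A" and gk: "gk_dim V A s t < \<infinity>"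
    and cu: "cyclic_vertex V A s t u"
  shows "walk s t u (the_cycle V A s t u) \<and> pend t (u, the_cycle V A s t u) = u \<and>
         the_cycle V A s t u \<noteq> [] \<and> set (the_cycle V A s t u) \<subseteq> A"
proof -
  have "\<exists>!as. simple_cycle V A s t u as"
    using simple_cycle_exists[OF cu] cycle_unique[OF fV fA gk] by blast
  then have "simple_cycle V A s t u (the_cycle V A s t u)"
    unfolding the_cycle_def by (rule theI')
  then show ?thesis by (auto simp: simple_cycle_def is_path_walk)
qed

lemma O_mod_eq:
  assumes q: "quiver V A s t" and u: "u \<in> V" and w: "walk s t u p" and c: "pend t (u, p) = u"
    and pA: "set p \<subseteq> A" and pe: "p = the_cycle V A s t u"
  shows "(O_mod V A s t u :: (('v,'a) path \<Rightarrow> 'k::field) set \<times> _) =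
         (Pref V A s t {(u, [])}, Pref V A s t (Gs A s u p))"
proof -
  have "gen_rsub V A s t (O_gens V A s t u) = (Pref V A s t (Gs A s u p) :: (('v,'a) path \<Rightarrow> 'k) set)"
    unfolding O_gens_eq pe[symmetric] by (rule gen_rsub_Pref[OF q Gs_paths[OF u w c pA]])
  then show ?thesis unfolding O_mod_def using evkQ_Pref[OF u] by simp
qed

theorem lemma5p2:
  fixes V :: "'v set" and A :: "'a set" and s t :: "'a \<Rightarrow> 'v" and v w :: 'v
  assumes "quiver V A s t" and "finite V" and "finite A"
    and "gk_dim V A s t < \<infinity>"
    and "v \<in> V" and "w \<in> V"
    and "cyclic_vertex V A s t v" and "cyclic_vertex V A s t w"
  shows "qgr_hom_nonzero V A s t
           (O_mod V A s t v :: (('v \<times> 'a list \<Rightarrow> 'k::field) set \<times> _))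
           (O_mod V A s t w) \<longleftrightarrow> v = w"
proof -
  note fv = cyc_facts[OF assms(2,3,4,7)]
  note fw = cyc_facts[OF assms(2,3,4,8)]
  have Ov: "(O_mod V A s t v :: (('v,'a) path \<Rightarrow> 'k::field) set \<times> _) =
         (Pref V A s t {(v, [])}, Pref V A s t (Gs A s v (the_cycle V A s t v)))"
    using O_mod_eq[OF assms(1,5)] fv by blast
  have Ow: "(O_mod V A s t w :: (('v,'a) path \<Rightarrow> 'k::field) set \<times> _) =
         (Pref V A s t {(w, [])}, Pref V A s t (Gs A s w (the_cycle V A s t w)))"
    using O_mod_eq[OF assms(1,6)] fw by blast
  show ?thesis
  proof (cases "v = w")
    case True
    have "qgr_hom_nonzero V A s t
           (Pref V A s t {(v, [])} :: (('v,'a) path \<Rightarrow> 'k::field) set, Pref V A s t (Gs A s v (the_cycle V A s t v)))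
           (Pref V A s t {(v, [])}, Pref V A s t (Gs A s v (the_cycle V A s t v)))"
      by (rule dir_nonzero[OF assms(1,5)]) (use fv in auto)
    then show ?thesis unfolding Ow Ov using True by simp
  next
    case False
    then show ?thesis unfolding Ow Ov using dir_zero[OF assms(1,5,6) False] fv fw by blast
  qed
qed


end
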